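(* Let $f(u)=e^{g(u)}$ where $g\in C^3[0,\infty)$ satisfies $g'>0$, $g''>0$, $g'^2-g''\ge0$, $2g''^2-g'g'''>0$ on $[0,\infty)$. Then $\frac{h''(y)}{h'(y)}\le4$ for $y\ge-\log F(0)$.
   Context: $F(u)=\int_u^\infty\frac{ds}{f(s)}$, $\eta(y)=F^{-1}(e^{-y})$ for $y\ge-\log F(0)$ (with $F^{-1}$ the inverse of the decreasing function $F$), and $h(y)=1-f'(\eta(y))F(\eta(y))$. Under the hypotheses $h'(y)<0$ for $y\ge -\log F(0)$. *)

theory Defs
  imports "HOL-Analysis.Analysis"
begin

definition fexp :: "(real \<Rightarrow> real) \<Rightarrow> real \<Rightarrow> real" where
  "fexp g u = exp (g u)"

definition Fint :: "(real \<Rightarrow> real) \<Rightarrow> real \<Rightarrow> real" where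
  "Fint g u = integral {u..} (\<lambda>s. 1 / fexp g s)"

definition eta :: "(real \<Rightarrow> real) \<Rightarrow> real \<Rightarrow> real" where
  "eta g y = (THE u. 0 \<le> u \<and> Fint g u = exp (- y))"

text \<open>h(y) = 1 - f'(eta y) F(eta y), where f' = g' exp(g), g' given as g1.\<close>
definition hfun :: "(real \<Rightarrow> real) \<Rightarrow> (real \<Rightarrow> real) \<Rightarrow> real \<Rightarrow> real" where
  "hfun g g1 y = 1 - g1 (eta g y) * fexp g (eta g y) * Fint g (eta g y)"

end

theory Submission
  imports Defs
begin


lemma incr_half:
  fixes f f' :: "real \<Rightarrow> real"
  assumes d: "\<And>x. 0 \<le> x \<Longrightarrow> (f has_real_derivative f' x) (at x within {0..})"
    and p: "\<And>x. 0 \<le> x \<Longrightarrow> f' x \<ge> 0" and xy: "0 \<le> x" "x \<le> y"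
  shows "f x \<le> f y"
proof -
  have c: "continuous_on {0..} f" using d by (intro DERIV_continuous_on) auto
  show ?thesis
  proof (rule DERIV_nonneg_imp_increasing_open[OF xy(2)])
    fix z assume z: "x < z" "z < y"
    have "at z within {0..} = at z" using z xy by (intro at_within_interior) auto
    then show "\<exists>y. (f has_real_derivative y) (at z) \<and> 0 \<le> y" using d[of z] p[of z] z xy by auto
  next
    show "continuous_on {x..y} f" by (rule continuous_on_subset[OF c]) (use xy in auto)
  qed
qed

lemma sincr_half:
  fixes f f' :: "real \<Rightarrow> real"
  assumes d: "\<And>x. 0 \<le> x \<Longrightarrow> (f has_real_derivative f' x) (at x within {0..})"
    and p: "\<And>x. 0 \<le> x \<Longrightarrow> f' x > 0" and xy: "0 \<le> x" "x < y"
  shows "f x < f y"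
proof -
  have c: "continuous_on {0..} f" using d by (intro DERIV_continuous_on) auto
  show ?thesis
  proof (rule DERIV_pos_imp_increasing_open[OF xy(2)])
    fix z assume z: "x < z" "z < y"
    have "at z within {0..} = at z" using z xy by (intro at_within_interior) auto
    then show "\<exists>y. (f has_real_derivative y) (at z) \<and> 0 < y" using d[of z] p[of z] z xy by auto
  next
    show "continuous_on {x..y} f" by (rule continuous_on_subset[OF c]) (use xy in auto)
  qed
qed

lemma inv_deriv:
  fixes f g :: "real \<Rightarrow> real"
  assumes df: "(f has_real_derivative D) (at (g x) within T)" and D: "D \<noteq> 0"
    and gS: "g ` S \<subseteq> T" and fg: "\<And>z. z \<in> S \<Longrightarrow> f (g z) = z"
    and cg: "continuous (at x within S) g" and x: "x \<in> S"
  shows "(g has_real_derivative inverse D) (at x within S)"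
proof -
  have l1: "((\<lambda>w. (f w - f (g x)) / (w - g x)) \<longlongrightarrow> D) (at (g x) within T)"
    using df by (simp add: has_field_derivative_iff)
  have fl: "filterlim g (at (g x) within T) (at x within S)"
    unfolding filterlim_at
  proof
    show "\<forall>\<^sub>F z in at x within S. g z \<in> T \<and> g z \<noteq> g x"
      unfolding eventually_at_filter
    proof (rule always_eventually, intro allI impI)
      fix z assume "z \<noteq> x" "z \<in> S"
      then show "g z \<in> T \<and> g z \<noteq> g x" using gS fg[of z] fg[OF x] by auto
    qed
    show "(g \<longlongrightarrow> g x) (at x within S)" using cg by (simp add: continuous_within)
  qed
  have l2: "((\<lambda>z. (f (g z) - f (g x)) / (g z - g x)) \<longlongrightarrow> D) (at x within S)"
    using filterlim_compose[OF l1 fl] by (simp add: o_def)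
  have l3: "((\<lambda>z. inverse ((f (g z) - f (g x)) / (g z - g x))) \<longlongrightarrow> inverse D) (at x within S)"
    using tendsto_inverse[OF l2 D] .
  have ev: "\<forall>\<^sub>F z in at x within S. inverse ((f (g z) - f (g x)) / (g z - g x)) = (g z - g x) / (z - x)"
    unfolding eventually_at_filter
    by (rule always_eventually) (auto simp: fg x)
  have "((\<lambda>z. (g z - g x) / (z - x)) \<longlongrightarrow> inverse D) (at x within S)"
    using Lim_transform_eventually[OF l3 ev] .
  then show ?thesis by (simp add: has_field_derivative_iff)
qed




lemma div_le4: "(Y::real) < 0 \<Longrightarrow> 4*Y \<le> X \<Longrightarrow> X/Y \<le> 4"
  by (simp add: divide_le_eq)

lemma final_ineq:
  fixes a b c E :: real
  assumes a: "a > 0" and b: "b > 0" and ba: "b \<le> a^2" and cc: "2*b^2 - a*c > 0"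
    and lo: "E \<ge> a/(b+a^2)" and up: "E \<le> 1/a"
  shows "E*(-a + 3*(b+a^2)*E - (c+4*a*b+2*a^3)*E^2) / (E*(a - (b+a^2)*E)) \<le> 4"
proof -
  define s where "s = b + a^2"
  define k where "k = c+4*a*b+2*a^3"
  define r where "r = a / s"
  define Q where "Q = (\<lambda>x. -5*a + 7 * s*x - k*x^2)"
  have s: "s > 0" using a b by (simp add: s_def add_pos_pos)
  have Epos: "E > 0" using lo a s r_def s_def by (smt (verit) divide_pos_pos)
  have rE: "r \<le> E" using lo by (simp add: r_def s_def)
  have sE: "s * E \<ge> a" using rE s by (simp add: r_def field_simps)
  have ra: "r < 1/a" using a b s by (simp add: r_def s_def field_simps power2_eq_square)
  have c2: "a * c < 2*b^2" using cc by simp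
  have "b*b \<le> a^2*b" using mult_right_mono[OF ba, of b] b by simp
  then have "a * c < a * (2*a*b)" using c2 by (simp add: power2_eq_square algebra_simps)
  then have c3: "c < 2*a*b" using a by simp
  have Qr: "Q r > 0"
  proof -
    have "Q r * s^2 = a * (2 * s^2 - k*a)" using s
      by (simp add: Q_def r_def field_simps power2_eq_square)
    also have "2 * s^2 - k*a = 2*b^2 - a*c"
      by (simp add: s_def k_def algebra_simps power2_eq_square power3_eq_cube)
    moreover have "a * (2*b^2 - a*c) > 0" using a cc by simp
    ultimately show ?thesis using s by (smt (verit) mult_nonpos_nonneg zero_le_power2)
  qed
  have Qa: "Q (1/a) > 0"
  proof -
    have "Q (1/a) * a^2 = 3*a*b - c" using a
      by (simp add: Q_def s_def k_def field_simps power2_eq_square) (simp add: algebra_simps power3_eq_cube)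
    moreover have "3*a*b - c > 0" using c3 mult_pos_pos[OF a b] by simp
    ultimately show ?thesis using a by (smt (verit) mult_nonpos_nonneg zero_le_power2)
  qed
  have QE: "Q E \<ge> 0"
  proof (cases "k \<ge> 0")
    case True
    have id: "(1/a - r) * Q E = (1/a - E) * Q r + (E - r) * Q (1/a) + k*(E-r)*(1/a-E)*(1/a - r)"
      using a by (simp add: Q_def field_simps power2_eq_square)
    have "(1/a - E) * Q r \<ge> 0" using up Qr by simp
    moreover have "(E - r) * Q (1/a) \<ge> 0" using rE Qa by simp
    moreover have "k*(E-r)*(1/a-E)*(1/a - r) \<ge> 0" using True rE up ra by simp
    ultimately have "(1/a - r) * Q E \<ge> 0" using id by linarith
    then show ?thesis using ra by (simp add: zero_le_mult_iff)
  next
    case False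
    have id: "Q E - Q r = (E - r) * (7 * s - k*(E+r))"
      by (simp add: Q_def field_simps power2_eq_square)
    have "r \<ge> 0" using a s by (simp add: r_def)
    then have "7 * s - k*(E+r) \<ge> 0" using False s Epos
      by (smt (verit) mult_nonneg_nonneg mult_nonpos_nonneg)
    then have "Q E - Q r \<ge> 0" using id rE by simp
    then show ?thesis using Qr by simp
  qed
  have h1: "E*(a - (b+a^2)*E) \<le> 0" using Epos sE by (simp add: s_def mult_nonneg_nonpos)
  have diff: "E*(-a + 3*(b+a^2)*E - (c+4*a*b+2*a^3)*E^2) - 4 * (E*(a - (b+a^2)*E)) = E * Q E"
    by (simp add: Q_def s_def k_def algebra_simps power2_eq_square)
  have "E * Q E \<ge> 0" using Epos QE by simp
  show ?thesis
  proof (cases "E*(a - (b+a^2)*E) = 0")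
    case True then show ?thesis by (simp only: div_by_0)
  next
    case False
    then have neg: "E*(a - (b+a^2)*E) < 0" using h1 by linarith
    show ?thesis by (rule div_le4[OF neg]) (use diff \<open>E * Q E \<ge> 0\<close> in linarith)
  qed
qed




locale L34 =
  fixes g g1 g2 g3 :: "real \<Rightarrow> real"
  assumes d1: "\<And>x. 0 \<le> x \<Longrightarrow> (g has_real_derivative g1 x) (at x within {0..})"
    and d2: "\<And>x. 0 \<le> x \<Longrightarrow> (g1 has_real_derivative g2 x) (at x within {0..})"
    and d3: "\<And>x. 0 \<le> x \<Longrightarrow> (g2 has_real_derivative g3 x) (at x within {0..})"
    and pos1: "\<And>x. 0 \<le> x \<Longrightarrow> g1 x > 0"
    and pos2: "\<And>x. 0 \<le> x \<Longrightarrow> g2 x > 0"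
    and h3: "\<And>x. 0 \<le> x \<Longrightarrow> (g1 x)\<^sup>2 - g2 x \<ge> 0"
    and h4: "\<And>x. 0 \<le> x \<Longrightarrow> 2 * (g2 x)\<^sup>2 - g1 x * g3 x > 0"
begin

definition e :: "real \<Rightarrow> real" where "e s = exp (- g s)"
definition F :: "real \<Rightarrow> real" where "F u = integral {u..} e"

lemma cg: "continuous_on {0..} g"
  by (rule DERIV_continuous_on[of _ _ g1]) (use d1 in auto)

lemma g1_mono: "0 \<le> x \<Longrightarrow> x \<le> y \<Longrightarrow> g1 x \<le> g1 y"
  by (rule incr_half[of g1 g2]) (use d2 pos2 less_imp_le in auto)

lemma a0: "0 \<le> x \<Longrightarrow> g1 0 \<le> g1 x"
  using g1_mono[of 0 x] by simp

lemma g_lin: assumes "0 \<le> x" shows "g 0 + g1 0 * x \<le> g x"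
proof -
  have "(\<lambda>x. g x - g1 0 * x) 0 \<le> (\<lambda>x. g x - g1 0 * x) x"
  proof (rule incr_half[of "\<lambda>x. g x - g1 0 * x" "\<lambda>x. g1 x - g1 0"])
    fix x :: real assume "0 \<le> x"
    show "((\<lambda>x. g x - g1 0 * x) has_real_derivative g1 x - g1 0) (at x within {0..})"
      using DERIV_diff[OF d1[OF \<open>0 \<le> x\<close>] DERIV_cmult[OF DERIV_ident, of "g1 0"]] by simp
  next
    fix x :: real assume "0 \<le> x"
    show "0 \<le> g1 x - g1 0" using a0 \<open>0 \<le> x\<close> by simp
  qed (use assms in auto)
  then show ?thesis by simp
qed

lemma e_pos: "e s > 0" by (simp add: e_def)

lemma e_bound: assumes "0 \<le> s" shows "e s \<le> exp (- g 0) * exp (- g1 0 * s)"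
proof -
  have "e s = exp (- g s)" by (simp add: e_def)
  also have "\<dots> \<le> exp (- g 0 - g1 0 * s)" using g_lin[OF assms] by simp
  also have "\<dots> = exp (- g 0) * exp (- g1 0 * s)" by (simp add: exp_diff exp_minus field_simps)
  finally show ?thesis .
qed

lemma e_cont: "continuous_on {0..} e"
  unfolding e_def by (intro continuous_intros cg)

lemma e_int: assumes "0 \<le> u" shows "e integrable_on {u..}"
proof -
  have bi: "(\<lambda>s. exp (- g 0) * exp (- g1 0 * s)) integrable_on {u..}"
    using integrable_on_cmult_left[OF integrable_on_exp_minus_to_infinity[of "g1 0" u], of "exp (- g 0)"]
      pos1[of 0] by simp
  have "e absolutely_integrable_on {u..}"
  proof (rule measurable_bounded_by_integrable_imp_absolutely_integrable[OF _ _ bi])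
    show "e \<in> borel_measurable (lebesgue_on {u..})"
      by (rule continuous_imp_measurable_on_sets_lebesgue)
         (use continuous_on_subset[OF e_cont] assms in auto)
    show "{u..} \<in> sets lebesgue" by simp
    show "norm (e x) \<le> exp (- g 0) * exp (- g1 0 * x)" if "x \<in> {u..}" for x
      using e_bound[of x] e_pos[of x] that assms by simp
  qed
  then show ?thesis using set_lebesgue_integral_eq_integral(1) by blast
qed

lemma F_split: assumes "0 \<le> u" shows "F 0 = integral {0..u} e + F u"
proof -
  have "(e has_integral (integral {0..u} e + F u)) ({0..u} \<union> {u..})"
  proof (rule has_integral_Un)
    show "(e has_integral integral {0..u} e) {0..u}"
      using integrable_continuous_real[OF continuous_on_subset[OF e_cont]] by auto
    show "(e has_integral F u) {u..}" unfolding F_def using e_int[OF assms] by auto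
    have "{0..u} \<inter> {u..} = {u}" using assms by auto
    then show "negligible ({0..u} \<inter> {u..})" by simp
  qed
  moreover have "{0..u} \<union> {u..} = {0::real..}" using assms by auto
  ultimately show ?thesis unfolding F_def by (simp add: integral_unique)
qed

lemma F_deriv: assumes "0 \<le> u" shows "(F has_real_derivative - e u) (at u within {0..})"
proof -
  have "((\<lambda>v. integral {0..v} e) has_real_derivative e u) (at u within {0..u+1})"
    by (rule integral_has_real_derivative) (use continuous_on_subset[OF e_cont] assms in auto)
  moreover have "at u within {0..u+1} = at u within {0..}"
    by (rule at_within_nhd[of _ "{..<u+1}"]) auto
  ultimately have "((\<lambda>v. integral {0..v} e) has_real_derivative e u) (at u within {0..})" by simp
  then have "((\<lambda>v. F 0 - integral {0..v} e) has_real_derivative - e u) (at u within {0..})"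
    using DERIV_diff[OF DERIV_const] by fastforce
  then show ?thesis
    by (rule has_field_derivative_transform_within[where d=1]) (use assms F_split in auto)
qed

lemma F_cont: "continuous_on {0..} F"
  by (rule DERIV_continuous_on[of _ _ "\<lambda>u. - e u"]) (use F_deriv in auto)

lemma F_sdec: "0 \<le> x \<Longrightarrow> x < y \<Longrightarrow> F y < F x"
  using sincr_half[of "\<lambda>u. - F u" e x y] DERIV_minus[OF F_deriv] e_pos
  by auto

lemma F_nonneg: "0 \<le> u \<Longrightarrow> 0 \<le> F u"
  unfolding F_def by (rule integral_nonneg[OF e_int]) (use e_pos less_imp_le in auto)

lemma F_bound: assumes "0 \<le> u" shows "F u \<le> exp (- g 0) * (exp (- g1 0 * u) / g1 0)"
proof -
  have "((\<lambda>s. exp (- g 0) * exp (- g1 0 * s)) has_integral exp (- g 0) * (exp (- g1 0 * u) / g1 0)) {u..}"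
    using has_integral_mult_right[OF has_integral_exp_minus_to_infinity[of "g1 0" u]] pos1[of 0] by simp
  then have "integral {u..} e \<le> integral {u..} (\<lambda>s. exp (- g 0) * exp (- g1 0 * s))"
    by (intro integral_le[OF e_int[OF assms]]) (use e_bound assms in auto)
  then show ?thesis unfolding F_def using integral_unique[OF \<open>(_ has_integral _) _\<close>] by simp
qed

lemma exp_decay: "((\<lambda>u. exp (- g1 0 * u)) \<longlongrightarrow> 0) at_top"
proof -
  have "filterlim (\<lambda>u. - g1 0 * u) at_bot at_top"
    by (rule filterlim_tendsto_neg_mult_at_bot[OF tendsto_const _ filterlim_ident]) (use pos1[of 0] in simp)
  from filterlim_compose[OF exp_at_bot this] show ?thesis by (simp add: o_def)
qed

lemma F_lim: "(F \<longlongrightarrow> 0) at_top"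
proof (rule tendsto_sandwich[of "\<lambda>_. 0" _ _ "\<lambda>u. exp (- g 0) * (exp (- g1 0 * u) / g1 0)"])
  show "\<forall>\<^sub>F n in at_top. 0 \<le> F n"
    using eventually_ge_at_top[of "0::real"] by (rule eventually_mono) (rule F_nonneg)
  show "\<forall>\<^sub>F n in at_top. F n \<le> exp (- g 0) * (exp (- g1 0 * n) / g1 0)"
    using eventually_ge_at_top[of "0::real"] by (rule eventually_mono) (rule F_bound)
  show "((\<lambda>u. exp (- g 0) * (exp (- g1 0 * u) / g1 0)) \<longlongrightarrow> 0) at_top"
    using tendsto_mult[OF tendsto_const[of "exp (- g 0)"] tendsto_divide[OF exp_decay tendsto_const[of "g1 0"]]]
      pos1[of 0] by simp
  show "((\<lambda>_. 0) \<longlongrightarrow> (0::real)) at_top" by simp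
qed


definition r :: "real \<Rightarrow> real" where "r u = g1 u / (g2 u + (g1 u)^2)"
definition G :: "real \<Rightarrow> real" where "G u = F u - r u * e u"
definition K :: "real \<Rightarrow> real" where "K u = e u / g1 u - F u"

lemma de: assumes "0 \<le> u" shows "(e has_real_derivative - g1 u * e u) (at u within {0..})"
proof -
  have "((\<lambda>s. exp (- g s)) has_real_derivative exp (- g u) * (- g1 u)) (at u within {0..})"
    by (rule DERIV_chain2[OF DERIV_exp DERIV_minus[OF d1[OF assms]]])
  then show ?thesis unfolding e_def[abs_def] by (simp add: mult.commute)
qed

lemma e_lim: "(e \<longlongrightarrow> 0) at_top"
proof (rule tendsto_sandwich[of "\<lambda>_. 0" _ _ "\<lambda>u. exp (- g 0) * exp (- g1 0 * u)"])
  show "\<forall>\<^sub>F n in at_top. 0 \<le> e n"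
    using eventually_ge_at_top[of "0::real"] by (rule eventually_mono) (use e_pos less_imp_le in blast)
  show "\<forall>\<^sub>F n in at_top. e n \<le> exp (- g 0) * exp (- g1 0 * n)"
    using eventually_ge_at_top[of "0::real"] by (rule eventually_mono) (rule e_bound)
  show "((\<lambda>u. exp (- g 0) * exp (- g1 0 * u)) \<longlongrightarrow> 0) at_top"
    using tendsto_mult[OF tendsto_const[of "exp (- g 0)"] exp_decay] by simp
  show "((\<lambda>_. 0) \<longlongrightarrow> (0::real)) at_top" by simp
qed

lemma bounded_e_lim:
  assumes "\<And>u. 0 \<le> u \<Longrightarrow> 0 \<le> q u \<and> q u \<le> 1 / g1 0"
  shows "((\<lambda>u. q u * e u) \<longlongrightarrow> 0) at_top"
proof (rule tendsto_sandwich[of "\<lambda>_. 0" _ _ "\<lambda>u. 1 / g1 0 * e u"])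
  show "\<forall>\<^sub>F n in at_top. 0 \<le> q n * e n"
    using eventually_ge_at_top[of "0::real"] by (rule eventually_mono)
      (meson assms e_pos less_imp_le mult_nonneg_nonneg)
  show "\<forall>\<^sub>F n in at_top. q n * e n \<le> 1 / g1 0 * e n"
    using eventually_ge_at_top[of "0::real"] by (rule eventually_mono)
      (meson assms e_pos less_imp_le mult_right_mono)
  show "((\<lambda>u. 1 / g1 0 * e u) \<longlongrightarrow> 0) at_top"
    using tendsto_mult[OF tendsto_const[of "1 / g1 0"] e_lim] by simp
  show "((\<lambda>_. 0) \<longlongrightarrow> (0::real)) at_top" by simp
qed

lemma r_bounds: assumes "0 \<le> u" shows "0 < r u" "r u \<le> 1 / g1 u" "1 / g1 u \<le> 1 / g1 0"
proof -
  have a: "g1 u > 0" and b: "g2 u > 0" using pos1 pos2 assms by auto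
  show "0 < r u" unfolding r_def using a b by (simp add: add_pos_pos)
  show "r u \<le> 1 / g1 u" unfolding r_def using a b
    by (simp add: divide_le_eq field_simps power2_eq_square add_pos_pos)
  show "1 / g1 u \<le> 1 / g1 0" using a0[OF assms] pos1[of 0] a
    by (simp add: divide_le_eq field_simps)
qed

lemma dec_lim_nonneg:
  fixes f f' :: "real \<Rightarrow> real"
  assumes d: "\<And>x. 0 \<le> x \<Longrightarrow> (f has_real_derivative f' x) (at x within {0..})"
    and p: "\<And>x. 0 \<le> x \<Longrightarrow> f' x \<le> 0" and l: "(f \<longlongrightarrow> 0) at_top" and u: "0 \<le> u"
  shows "0 \<le> f u"
proof (rule tendsto_upperbound[OF l])
  show "\<forall>\<^sub>F x in at_top. f x \<le> f u"
    using eventually_ge_at_top[of u]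
  proof (rule eventually_mono)
    fix x assume "u \<le> x"
    have "- f u \<le> - f x"
      by (rule incr_half[of "\<lambda>x. - f x" "\<lambda>x. - f' x"]) (use DERIV_minus[OF d] p u \<open>u \<le> x\<close> in auto)
    then show "f x \<le> f u" by simp
  qed
qed simp


lemma ds: assumes "0 \<le> u"
  shows "((\<lambda>x. g2 x + (g1 x)^2) has_real_derivative g3 u + 2 * g1 u * g2 u) (at u within {0..})"
  by (rule DERIV_cong[OF DERIV_add[OF d3[OF assms] DERIV_power[OF d2[OF assms], of 2]]]) (simp add: algebra_simps)

lemma dr: assumes "0 \<le> u"
  shows "(r has_real_derivative (g2 u * (g2 u + (g1 u)^2) - g1 u * (g3 u + 2 * g1 u * g2 u)) / ((g2 u + (g1 u)^2) * (g2 u + (g1 u)^2))) (at u within {0..})"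
  unfolding r_def[abs_def]
proof (rule DERIV_divide[OF d2[OF assms] ds[OF assms]])
  have "g2 u + (g1 u)^2 > 0" using pos2[OF assms] by (simp add: add_pos_nonneg)
  then show "g2 u + (g1 u)^2 \<noteq> 0" by simp
qed

lemma algG:
  fixes a b c E :: real
  assumes a: "a > 0" and b: "b > 0" and cc: "2*b^2 - a*c > 0" and E: "E > 0"
  shows "- E - ((b * (b + a^2) - a * (c + 2 * a * b)) / ((b + a^2) * (b + a^2)) * E + a / (b + a^2) * (- a * E)) \<le> 0"
proof -
  define s where "s = b + a^2"
  have s: "s > 0" using a b by (simp add: s_def add_pos_pos)
  have "- E - ((b * s - a * (c + 2 * a * b)) / (s * s) * E + a / s * (- a * E)) = E * (2 * a * a * b + a * a * s + a * c - s * s - b * s) / (s * s)"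
    using s by (simp add: field_simps)
  also have "2 * a * a * b + a * a * s + a * c - s * s - b * s = a * c - 2 * b^2"
    by (simp add: s_def algebra_simps power2_eq_square)
  finally have eq: "- E - ((b * s - a * (c + 2 * a * b)) / (s * s) * E + a / s * (- a * E)) = E * (a * c - 2 * b^2) / (s * s)" .
  have "E * (a * c - 2 * b^2) \<le> 0" using E cc by (simp add: mult_nonneg_nonpos)
  then have "E * (a * c - 2 * b^2) / (s * s) \<le> 0" using s by (simp add: divide_nonpos_pos)
  then show ?thesis using eq by (simp add: s_def)
qed

lemma algK:
  fixes a b E :: real
  assumes a: "a > 0" and b: "b > 0" and E: "E > 0"
  shows "((- a * E) * a - E * b) / (a * a) - (- E) \<le> 0"
proof -
  have "((- a * E) * a - E * b) / (a * a) - (- E) = - (E * b) / (a * a)" using a by (simp add: field_simps)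
  also have "\<dots> \<le> 0" using a b E by simp
  finally show ?thesis .
qed

lemma G_nonneg: assumes "0 \<le> u" shows "0 \<le> G u"
proof (rule dec_lim_nonneg[OF _ _ _ assms])
  fix x :: real assume x: "0 \<le> x"
  show "(G has_real_derivative (- e x - ((g2 x * (g2 x + (g1 x)^2) - g1 x * (g3 x + 2 * g1 x * g2 x)) / ((g2 x + (g1 x)^2) * (g2 x + (g1 x)^2)) * e x + r x * (- g1 x * e x)))) (at x within {0..})"
    unfolding G_def[abs_def] using DERIV_diff[OF F_deriv[OF x] DERIV_mult[OF dr[OF x] de[OF x]]] by (simp add: ac_simps)
  show "- e x - ((g2 x * (g2 x + (g1 x)^2) - g1 x * (g3 x + 2 * g1 x * g2 x)) / ((g2 x + (g1 x)^2) * (g2 x + (g1 x)^2)) * e x + r x * (- g1 x * e x)) \<le> 0"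
    unfolding r_def using algG[OF pos1[OF x] pos2[OF x] h4[OF x] e_pos[of x]] by simp
next
  have "((\<lambda>u. r u * e u) \<longlongrightarrow> 0) at_top"
    by (rule bounded_e_lim) (use r_bounds in fastforce)
  then show "(G \<longlongrightarrow> 0) at_top" unfolding G_def[abs_def] using tendsto_diff[OF F_lim] by fastforce
qed

lemma K_nonneg: assumes "0 \<le> u" shows "0 \<le> K u"
proof (rule dec_lim_nonneg[OF _ _ _ assms])
  fix x :: real assume x: "0 \<le> x"
  show "(K has_real_derivative (((- g1 x * e x) * g1 x - e x * g2 x) / (g1 x * g1 x) - (- e x))) (at x within {0..})"
    unfolding K_def[abs_def]
    by (rule DERIV_diff[OF DERIV_divide[OF de[OF x] d2[OF x]] F_deriv[OF x]]) (use pos1[OF x] in simp)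
  show "((- g1 x * e x) * g1 x - e x * g2 x) / (g1 x * g1 x) - (- e x) \<le> 0"
    using algK[OF pos1[OF x] pos2[OF x] e_pos[of x]] by simp
next
  have "((\<lambda>u. (1 / g1 u) * e u) \<longlongrightarrow> 0) at_top"
    by (rule bounded_e_lim) (use r_bounds pos1 in \<open>fastforce simp: less_imp_le\<close>)
  then show "(K \<longlongrightarrow> 0) at_top" unfolding K_def[abs_def] using tendsto_diff[OF _ F_lim] by fastforce
qed

lemma P_bounds: assumes "0 \<le> u" shows "r u \<le> F u / e u" "F u / e u \<le> 1 / g1 u" "0 < F u"
proof -
  show "r u \<le> F u / e u" using G_nonneg[OF assms] e_pos[of u] by (simp add: G_def le_divide_eq)
  show "F u / e u \<le> 1 / g1 u" using K_nonneg[OF assms] e_pos[of u] pos1[OF assms]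
    by (simp add: K_def divide_le_eq field_simps)
  show "0 < F u" using G_nonneg[OF assms] r_bounds(1)[OF assms] e_pos[of u] unfolding G_def
    by (smt (verit) mult_pos_pos)
qed

end



context L34 begin

lemma Fint_eq: "Fint g u = F u"
proof -
  have "(\<lambda>s. 1 / fexp g s) = e" by (auto simp: fexp_def e_def exp_minus inverse_eq_divide)
  then show ?thesis by (simp add: Fint_def F_def)
qed

lemma F_mono: assumes "0 \<le> x" "x \<le> y" shows "F y \<le> F x"
proof (cases "x = y")
  case True then show ?thesis by simp
next
  case False then have "x < y" using assms by simp
  then show ?thesis using F_sdec[OF assms(1)] less_imp_le by blast
qed

lemma exp_le_ln: fixes p z :: real assumes "0 < p" shows "exp (- z) \<le> p \<longleftrightarrow> - z \<le> ln p"
  using ln_le_cancel_iff[of "exp (- z)" p] assms by simp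

lemma exp_less_ln: fixes p z :: real assumes "0 < p" shows "exp (- z) < p \<longleftrightarrow> - z < ln p"
  using ln_less_cancel_iff[of "exp (- z)" p] assms by simp

lemma eta_ex1: assumes y: "- ln (F 0) \<le> y" shows "\<exists>!u. 0 \<le> u \<and> F u = exp (- y)"
proof (rule ex_ex1I)
  have F0: "F 0 > 0" using P_bounds(3)[of 0] by simp
  have "exp (- y) \<le> F 0" using exp_le_ln[OF F0, of y] y by simp
  have "\<forall>\<^sub>F x in at_top. F x < exp (- y)" by (rule order_tendstoD(2)[OF F_lim]) simp
  then obtain N where N: "\<And>x. x \<ge> N \<Longrightarrow> F x < exp (- y)" by (auto simp: eventually_at_top_linorder)
  define U where "U = max N 0"
  have "F U < exp (- y)" using N by (simp add: U_def)
  then have "\<exists>x. 0 \<le> x \<and> x \<le> U \<and> F x = exp (- y)"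
    using \<open>exp (- y) \<le> F 0\<close>
    by (intro IVT2') (auto simp: U_def intro: continuous_on_subset[OF F_cont])
  then show "\<exists>u. 0 \<le> u \<and> F u = exp (- y)" by auto
next
  fix u v assume "0 \<le> u \<and> F u = exp (- y)" "0 \<le> v \<and> F v = exp (- y)"
  then show "u = v" using F_sdec[of u v] F_sdec[of v u] by (cases u v rule: linorder_cases) auto
qed

lemma eta_prop: assumes "- ln (F 0) \<le> y" shows "0 \<le> eta g y" "F (eta g y) = exp (- y)"
proof -
  have "0 \<le> eta g y \<and> F (eta g y) = exp (- y)"
    unfolding eta_def Fint_eq by (rule theI'[OF eta_ex1[OF assms]])
  then show "0 \<le> eta g y" "F (eta g y) = exp (- y)" by auto
qed

lemma eta_cont: assumes y: "- ln (F 0) \<le> y" shows "continuous (at y within {- ln (F 0)..}) (eta g)"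
  unfolding continuous_within_eps_delta
proof (intro allI impI)
  fix \<epsilon> :: real assume ep: "\<epsilon> > 0"
  define u where "u = eta g y"
  have u0: "0 \<le> u" and Fu: "F u = exp (- y)" using eta_prop[OF y] by (auto simp: u_def)
  have Fp: "\<And>x. 0 \<le> x \<Longrightarrow> F x > 0" using P_bounds(3) by blast
  define d1 where "d1 = - ln (F (u + \<epsilon>)) - y"
  have "F (u + \<epsilon>) < exp (- y)" using F_sdec[of u "u + \<epsilon>"] u0 ep Fu by simp
  then have d1: "d1 > 0" unfolding d1_def
    using ln_less_cancel_iff[of "F (u + \<epsilon>)" "exp (- y)"] Fp[of "u + \<epsilon>"] u0 ep by simp
  obtain d2 where d2: "d2 > 0" and d2p: "\<And>z. - ln (F 0) \<le> z \<Longrightarrow> y - d2 < z \<Longrightarrow> u - \<epsilon> < eta g z"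
  proof (cases "u - \<epsilon> < 0")
    case True
    then show ?thesis using that[of 1] eta_prop(1) by force
  next
    case False
    define d2 where "d2 = y + ln (F (u - \<epsilon>))"
    have "F u < F (u - \<epsilon>)" using F_sdec[of "u - \<epsilon>" u] False ep by simp
    then have "d2 > 0" unfolding d2_def
      using ln_less_cancel_iff[of "exp (- y)" "F (u - \<epsilon>)"] Fp[of "u - \<epsilon>"] False Fu by simp
    moreover have "u - \<epsilon> < eta g z" if z: "- ln (F 0) \<le> z" "y - d2 < z" for z
    proof (rule ccontr)
      assume "\<not> u - \<epsilon> < eta g z"
      then have "F (u - \<epsilon>) \<le> F (eta g z)" using F_mono[of "eta g z" "u - \<epsilon>"] eta_prop(1)[OF z(1)] by simp
      then have "F (u - \<epsilon>) \<le> exp (- z)" using eta_prop(2)[OF z(1)] by simp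
      then have "ln (F (u - \<epsilon>)) \<le> - z"
        using ln_le_cancel_iff[of "F (u - \<epsilon>)" "exp (- z)"] Fp[of "u - \<epsilon>"] False by simp
      then show False using z(2) unfolding d2_def by simp
    qed
    ultimately show ?thesis using that by blast
  qed
  show "\<exists>\<delta>>0. \<forall>z\<in>{- ln (F 0)..}. dist z y < \<delta> \<longrightarrow> dist (eta g z) (eta g y) < \<epsilon>"
  proof (intro exI[of _ "min d1 d2"] conjI ballI impI)
    show "0 < min d1 d2" using d1 d2 by simp
    fix z assume z: "z \<in> {- ln (F 0)..}" and dz: "dist z y < min d1 d2"
    have zS: "- ln (F 0) \<le> z" using z by simp
    have up: "eta g z < u + \<epsilon>"
    proof (rule ccontr)
      assume "\<not> eta g z < u + \<epsilon>"
      then have "F (eta g z) \<le> F (u + \<epsilon>)" using F_mono[of "u + \<epsilon>" "eta g z"] u0 ep by simp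
      then have "exp (- z) \<le> F (u + \<epsilon>)" using eta_prop(2)[OF zS] by simp
      then have "- z \<le> ln (F (u + \<epsilon>))" using exp_le_ln Fp[of "u + \<epsilon>"] u0 ep by simp
      then show False using dz unfolding d1_def dist_real_def by (simp add: abs_less_iff)
    qed
    have lo: "u - \<epsilon> < eta g z" using d2p[OF zS] dz by (simp add: dist_real_def abs_less_iff)
    show "dist (eta g z) (eta g y) < \<epsilon>" using up lo by (simp add: dist_real_def u_def)
  qed
qed


definition A :: "real \<Rightarrow> real" where "A y = g1 (eta g y)"
definition B :: "real \<Rightarrow> real" where "B y = g2 (eta g y)"
definition C :: "real \<Rightarrow> real" where "C y = g3 (eta g y)"
definition Ef :: "real \<Rightarrow> real" where "Ef y = exp (g (eta g y) - y)"
definition H1 :: "real \<Rightarrow> real" where "H1 y = Ef y * (A y - (B y + (A y)^2) * Ef y)"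
definition H2 :: "real \<Rightarrow> real" where
  "H2 y = Ef y * (- A y + 3 * (B y + (A y)^2) * Ef y - (C y + 4 * A y * B y + 2 * (A y)^3) * (Ef y)^2)"

lemma Ef_eq: assumes y: "- ln (F 0) \<le> y" shows "Ef y = F (eta g y) / e (eta g y)"
proof -
  have "F (eta g y) / e (eta g y) = exp (- y) / exp (- g (eta g y))" by (simp add: e_def eta_prop(2)[OF y])
  also have "\<dots> = exp (- y - (- g (eta g y)))" by (rule exp_diff[symmetric])
  also have "- y - (- g (eta g y)) = g (eta g y) - y" by simp
  finally show ?thesis by (simp add: Ef_def)
qed

lemma dphi: assumes u: "0 \<le> u" shows "((\<lambda>u. - ln (F u)) has_real_derivative e u / F u) (at u within {0..})"
proof -
  have "((\<lambda>u. ln (F u)) has_real_derivative 1 / F u * (- e u)) (at u within {0..})"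
    by (rule DERIV_chain2[OF DERIV_ln_divide[OF P_bounds(3)[OF u]] F_deriv[OF u]])
  from DERIV_minus[OF this] show ?thesis by simp
qed

lemma eta_img: "eta g ` {- ln (F 0)..} \<subseteq> {0..}"
  using eta_prop(1) by auto

lemma deta: assumes y: "- ln (F 0) \<le> y" shows "(eta g has_real_derivative Ef y) (at y within {- ln (F 0)..})"
proof -
  define u where "u = eta g y"
  have u0: "0 \<le> u" using eta_prop(1)[OF y] by (simp add: u_def)
  have D: "e u / F u \<noteq> 0" using e_pos[of u] P_bounds(3)[OF u0] by simp
  have "(eta g has_real_derivative inverse (e u / F u)) (at y within {- ln (F 0)..})"
  proof (rule inv_deriv[of "\<lambda>u. - ln (F u)" _ "eta g" y "{0..}"])
    show "((\<lambda>u. - ln (F u)) has_real_derivative e u / F u) (at (eta g y) within {0..})"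
      using dphi[OF u0] by (simp add: u_def)
    show "e u / F u \<noteq> 0" by (rule D)
    show "eta g ` {- ln (F 0)..} \<subseteq> {0..}" by (rule eta_img)
    show "- ln (F (eta g z)) = z" if "z \<in> {- ln (F 0)..}" for z
      using eta_prop(2)[of z] that by simp
    show "continuous (at y within {- ln (F 0)..}) (eta g)" by (rule eta_cont[OF y])
    show "y \<in> {- ln (F 0)..}" using y by simp
  qed
  moreover have "inverse (e u / F u) = Ef y" using Ef_eq[OF y] by (simp add: u_def)
  ultimately show ?thesis by simp
qed

lemma dcomp:
  assumes y: "- ln (F 0) \<le> y" and dq: "\<And>x. 0 \<le> x \<Longrightarrow> (q has_real_derivative q' x) (at x within {0..})"
  shows "((\<lambda>y. q (eta g y)) has_real_derivative q' (eta g y) * Ef y) (at y within {- ln (F 0)..})"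
proof -
  have "(q has_real_derivative q' (eta g y)) (at (eta g y) within eta g ` {- ln (F 0)..})"
    by (rule has_field_derivative_subset[OF dq[OF eta_prop(1)[OF y]] eta_img])
  from DERIV_image_chain[OF this deta[OF y]] show ?thesis by (simp add: o_def)
qed

lemma dA: "- ln (F 0) \<le> y \<Longrightarrow> (A has_real_derivative B y * Ef y) (at y within {- ln (F 0)..})"
  unfolding A_def[abs_def] B_def by (rule dcomp[OF _ d2])

lemma dB: "- ln (F 0) \<le> y \<Longrightarrow> (B has_real_derivative C y * Ef y) (at y within {- ln (F 0)..})"
  unfolding B_def[abs_def] C_def by (rule dcomp[OF _ d3])

lemma dEf: assumes y: "- ln (F 0) \<le> y"
  shows "(Ef has_real_derivative Ef y * (A y * Ef y - 1)) (at y within {- ln (F 0)..})"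
proof -
  have "((\<lambda>y. exp (g (eta g y) - y)) has_real_derivative exp (g (eta g y) - y) * (g1 (eta g y) * Ef y - 1)) (at y within {- ln (F 0)..})"
    by (rule DERIV_chain2[OF DERIV_exp DERIV_diff[OF dcomp[OF y d1] DERIV_ident]])
  then show ?thesis by (simp add: Ef_def[abs_def] A_def)
qed

lemma hfun_eq: assumes y: "- ln (F 0) \<le> y" shows "hfun g g1 y = 1 - A y * Ef y"
proof -
  have "exp (g (eta g y)) * exp (- y) = exp (g (eta g y) - y)" by (simp flip: exp_add)
  then show ?thesis using eta_prop(2)[OF y]
    by (simp add: hfun_def fexp_def Fint_eq A_def Ef_def mult.assoc)
qed

lemma dh: assumes y: "- ln (F 0) \<le> y" shows "(hfun g g1 has_real_derivative H1 y) (at y within {- ln (F 0)..})"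
proof -
  have "((\<lambda>y. 1 - A y * Ef y) has_real_derivative H1 y) (at y within {- ln (F 0)..})"
    by (rule DERIV_cong[OF DERIV_diff[OF DERIV_const DERIV_mult[OF dA[OF y] dEf[OF y]]]])
       (simp add: H1_def algebra_simps power2_eq_square)
  then show ?thesis
    by (rule has_field_derivative_transform_within[where d=1]) (use y hfun_eq in auto)
qed

lemma dH1: assumes y: "- ln (F 0) \<le> y" shows "(H1 has_real_derivative H2 y) (at y within {- ln (F 0)..})"
  unfolding H1_def[abs_def]
  by (rule DERIV_cong[OF DERIV_mult[OF dEf[OF y] DERIV_diff[OF dA[OF y]
        DERIV_mult[OF DERIV_add[OF dB[OF y] DERIV_power[OF dA[OF y], of 2]] dEf[OF y]]]]])
     (simp add: H2_def algebra_simps power2_eq_square power3_eq_cube)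

lemma ratio: assumes y: "- ln (F 0) \<le> y" shows "H2 y / H1 y \<le> 4"
proof -
  define u where "u = eta g y"
  have u0: "0 \<le> u" using eta_prop(1)[OF y] by (simp add: u_def)
  have EF: "Ef y = F u / e u" using Ef_eq[OF y] by (simp add: u_def)
  have "H2 y / H1 y = Ef y * (- A y + 3 * (B y + (A y)^2) * Ef y - (C y + 4 * A y * B y + 2 * (A y)^3) * (Ef y)^2) / (Ef y * (A y - (B y + (A y)^2) * Ef y))"
    by (simp add: H1_def H2_def)
  also have "\<dots> \<le> 4"
  proof (rule final_ineq)
    show "A y > 0" "B y > 0" using pos1[OF u0] pos2[OF u0] by (simp_all add: A_def B_def u_def)
    show "B y \<le> (A y)^2" using h3[OF u0] by (simp add: A_def B_def u_def)
    show "2 * (B y)^2 - A y * C y > 0" using h4[OF u0] by (simp add: A_def B_def C_def u_def)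
    show "A y / (B y + (A y)^2) \<le> Ef y" using P_bounds(1)[OF u0] EF by (simp add: r_def A_def B_def u_def)
    show "Ef y \<le> 1 / A y" using P_bounds(2)[OF u0] EF by (simp add: A_def u_def)
  qed
  finally show ?thesis .
qed

end

theorem lemma3p4:
  fixes g g1 g2 g3 :: "real \<Rightarrow> real"
  assumes d1: "\<And>x. 0 \<le> x \<Longrightarrow> (g has_real_derivative g1 x) (at x within {0..})"
    and d2: "\<And>x. 0 \<le> x \<Longrightarrow> (g1 has_real_derivative g2 x) (at x within {0..})"
    and d3: "\<And>x. 0 \<le> x \<Longrightarrow> (g2 has_real_derivative g3 x) (at x within {0..})"
    and c3: "continuous_on {0..} g3"
    and pos1: "\<And>x. 0 \<le> x \<Longrightarrow> g1 x > 0"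
    and pos2: "\<And>x. 0 \<le> x \<Longrightarrow> g2 x > 0"
    and h3: "\<And>x. 0 \<le> x \<Longrightarrow> (g1 x)\<^sup>2 - g2 x \<ge> 0"
    and h4: "\<And>x. 0 \<le> x \<Longrightarrow> 2 * (g2 x)\<^sup>2 - g1 x * g3 x > 0"
  shows "\<exists>h1 h2 :: real \<Rightarrow> real.
           (\<forall>y \<ge> - ln (Fint g 0).
              (hfun g g1 has_real_derivative h1 y) (at y within {- ln (Fint g 0)..}) \<and>
              (h1 has_real_derivative h2 y) (at y within {- ln (Fint g 0)..}) \<and>
              h2 y / h1 y \<le> 4)"
proof -
  interpret L: L34 g g1 g2 g3
    by unfold_locales (fact d1 d2 d3 pos1 pos2 h3 h4)+
  have F0: "Fint g 0 = L.F 0" by (rule L.Fint_eq)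
  show ?thesis unfolding F0
    by (intro exI[of _ L.H1] exI[of _ L.H2] allI impI conjI L.dh L.dH1 L.ratio)
qed

end
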